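(* Let $N,T,K,G\ge1$, $\sigma^2>0$, and nonrandom $\mathbf X_{it}\in\mathbb R^K$ with $\sum_{t=1}^T\mathbf X_{it}\mathbf X_{it}'=\Sigma$ for all $i$, $\Sigma$ nonsingular. Let $\mathbb X$ be the $NT\times NK$ block-diagonal matrix with $i$-th block $X_i=(\mathbf X_{i1},\dots,\mathbf X_{iT})'$, $\mathbf Y\in\mathbb R^{NT}$ stacked outcomes, $\mathbf s=\mathbb X'\mathbf Y$, and suppose $\mathbf s\sim N(\mathbb X'\mathbb X\mathbf B,\sigma^2\mathbb X'\mathbb X)$. Fix $\boldsymbol\gamma\in\{1,\dots,G\}^N$ with all groups nonempty, $R$ ($r\times GK$, rank $r$) and $\mathbf r\in\mathbb R^r$. Then $R\widehat{\boldsymbol\alpha}(\boldsymbol\gamma)$ and $\mathbf W_{PCR}(\boldsymbol\gamma)$ are independent.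
   Context: $D(\boldsymbol\gamma)$ is the $N\times G$ group-dummy matrix, $\mathbb D(\boldsymbol\gamma)=D(\boldsymbol\gamma)\otimes I_K$, $\mathbb X(\boldsymbol\gamma)=\mathbb X\mathbb D(\boldsymbol\gamma)$. $\widehat{\boldsymbol\alpha}(\boldsymbol\gamma)=[\mathbb X(\boldsymbol\gamma)'\mathbb X(\boldsymbol\gamma)]^{-1}\mathbb D(\boldsymbol\gamma)'\mathbf s$; $\widehat{\boldsymbol\alpha}_R(\boldsymbol\gamma)=\widehat{\boldsymbol\alpha}(\boldsymbol\gamma)-[\mathbb X(\boldsymbol\gamma)'\mathbb X(\boldsymbol\gamma)]^{-1}R'\{R[\mathbb X(\boldsymbol\gamma)'\mathbb X(\boldsymbol\gamma)]^{-1}R'\}^{-1}[R\widehat{\boldsymbol\alpha}(\boldsymbol\gamma)-\mathbf r]$; $\widehat{\mathbf U}(\boldsymbol\gamma)=\mathbf Y-\mathbb X(\boldsymbol\gamma)\widehat{\boldsymbol\alpha}(\boldsymbol\gamma)$; $\mathbf W_{PCR}(\boldsymbol\gamma)=\mathbb X'\mathbb X(\boldsymbol\gamma)\widehat{\boldsymbol\alpha}_R(\boldsymbol\gamma)+\mathbb X'\widehat{\mathbf U}(\boldsymbol\gamma)$. *)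

theory Defs
  imports "HOL-Probability.Probability"
begin

text \<open>Individuals, time periods, regressors, groups and restrictions are
indexed by finite types 'n, 't, 'k, 'g, 'r (so N = CARD('n) >= 1 etc.).
A vector in R^{NK} is real^('n \<times> 'k) (block (i,k)); an m x p matrix is real^'p^'m.\<close>

definition outer_vec :: "real^'k::finite \<Rightarrow> real^'k::finite^'k::finite" where
  "outer_vec v = (\<chi> a b. v $ a * v $ b)"

definition bigX :: "('n::finite \<Rightarrow> 't::finite \<Rightarrow> real^'k::finite) \<Rightarrow> real^('n::finite \<times> 'k::finite)^('n::finite \<times> 't::finite)" where
  "bigX Xd = (\<chi> p q. if fst p = fst q then Xd (fst p) (snd p) $ snd q else 0)"

text \<open>Group dummy matrix D(gamma) (N x G) and DD(gamma) = D(gamma) \<otimes> I_K.\<close>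
definition dummyD :: "('n::finite \<Rightarrow> 'g::finite) \<Rightarrow> real^'g::finite^'n::finite" where
  "dummyD \<gamma> = (\<chi> i g. if \<gamma> i = g then 1 else 0)"

definition dummyDD :: "('n::finite \<Rightarrow> 'g::finite) \<Rightarrow> real^('g::finite \<times> 'k::finite)^('n::finite \<times> 'k::finite)" where
  "dummyDD \<gamma> = (\<chi> p q. dummyD \<gamma> $ fst p $ fst q * (if snd p = snd q then 1 else 0))"

definition Xgam :: "('n::finite \<Rightarrow> 't::finite \<Rightarrow> real^'k::finite) \<Rightarrow> ('n::finite \<Rightarrow> 'g::finite) \<Rightarrow> real^('g::finite \<times> 'k::finite)^('n::finite \<times> 't::finite)" where
  "Xgam Xd \<gamma> = bigX Xd ** dummyDD \<gamma>"

definition alpha_hat :: "('n::finite \<Rightarrow> 't::finite \<Rightarrow> real^'k::finite) \<Rightarrow> ('n::finite \<Rightarrow> 'g::finite) \<Rightarrow> real^('n::finite \<times> 'k::finite) \<Rightarrow> real^('g::finite \<times> 'k::finite)" where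
  "alpha_hat Xd \<gamma> s =
     matrix_inv (transpose (Xgam Xd \<gamma>) ** Xgam Xd \<gamma>) *v (transpose (dummyDD \<gamma>) *v s)"

definition alpha_hat_R ::
  "('n::finite \<Rightarrow> 't::finite \<Rightarrow> real^'k::finite) \<Rightarrow> ('n::finite \<Rightarrow> 'g::finite) \<Rightarrow> real^('g::finite \<times> 'k::finite)^'r::finite \<Rightarrow> real^'r::finite
     \<Rightarrow> real^('n::finite \<times> 'k::finite) \<Rightarrow> real^('g::finite \<times> 'k::finite)" where
  "alpha_hat_R Xd \<gamma> R rv s =
     (let Q = matrix_inv (transpose (Xgam Xd \<gamma>) ** Xgam Xd \<gamma>) in
      alpha_hat Xd \<gamma> s
        - (Q ** transpose R ** matrix_inv (R ** Q ** transpose R)) *v (R *v alpha_hat Xd \<gamma> s - rv))"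

definition U_hat :: "('n::finite \<Rightarrow> 't::finite \<Rightarrow> real^'k::finite) \<Rightarrow> ('n::finite \<Rightarrow> 'g::finite) \<Rightarrow> real^('n::finite \<times> 't::finite) \<Rightarrow> real^('n::finite \<times> 't::finite)" where
  "U_hat Xd \<gamma> Y = Y - Xgam Xd \<gamma> *v alpha_hat Xd \<gamma> (transpose (bigX Xd) *v Y)"

definition W_PCR ::
  "('n::finite \<Rightarrow> 't::finite \<Rightarrow> real^'k::finite) \<Rightarrow> ('n::finite \<Rightarrow> 'g::finite) \<Rightarrow> real^('g::finite \<times> 'k::finite)^'r::finite \<Rightarrow> real^'r::finite
     \<Rightarrow> real^('n::finite \<times> 't::finite) \<Rightarrow> real^('n::finite \<times> 'k::finite)" where
  "W_PCR Xd \<gamma> R rv Y =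
     (transpose (bigX Xd) ** Xgam Xd \<gamma>) *v alpha_hat_R Xd \<gamma> R rv (transpose (bigX Xd) *v Y)
     + transpose (bigX Xd) *v U_hat Xd \<gamma> Y"

definition gaussian_vec :: "'a measure \<Rightarrow> ('a \<Rightarrow> real^'m::finite) \<Rightarrow> real^'m::finite \<Rightarrow> real^'m::finite^'m::finite \<Rightarrow> bool" where
  "gaussian_vec M Z mu C \<longleftrightarrow>
     Z \<in> borel_measurable M \<and> transpose C = C \<and> (\<forall>a. 0 \<le> a \<bullet> (C *v a)) \<and>
     (\<forall>a. if a \<bullet> (C *v a) = 0 then (AE \<omega> in M. a \<bullet> Z \<omega> = a \<bullet> mu)
          else distributed M lborel (\<lambda>\<omega>. a \<bullet> Z \<omega>) (normal_density (a \<bullet> mu) (sqrt (a \<bullet> (C *v a)))))"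

text \<open>Independence of two random vectors (possibly of different types):
P(X \<in> A, Z \<in> B) = P(X \<in> A) P(Z \<in> B) for all Borel sets A, B.
(The library's indep_var requires both variables to have the same type.)\<close>
definition indep_rv :: "'a measure \<Rightarrow> ('a \<Rightarrow> 'b::topological_space) \<Rightarrow> ('a \<Rightarrow> 'c::topological_space) \<Rightarrow> bool" where
  "indep_rv M X Z \<longleftrightarrow> X \<in> borel_measurable M \<and> Z \<in> borel_measurable M \<and>
     (\<forall>A\<in>sets borel. \<forall>B\<in>sets borel.
        measure M (X -` A \<inter> Z -` B \<inter> space M) = measure M (X -` A \<inter> space M) * measure M (Z -` B \<inter> space M))"

end

theory Submission
  imports Defs
begin


inductive_set TPc :: "('e::euclidean_space \<Rightarrow> complex) set" where
  TPc_base: "(\<lambda>x. a * cis (t \<bullet> x)) \<in> TPc"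
| TPc_add: "f \<in> TPc \<Longrightarrow> g \<in> TPc \<Longrightarrow> (\<lambda>x. f x + g x) \<in> TPc"

lemma TPc_const: "(\<lambda>x. a) \<in> TPc"
proof -
  have "(\<lambda>x. a * cis ((0::'a) \<bullet> x)) \<in> TPc" by (rule TPc_base)
  then show ?thesis by simp
qed

lemma TPc_mult: "f \<in> TPc \<Longrightarrow> g \<in> TPc \<Longrightarrow> (\<lambda>x. f x * g x) \<in> TPc"
proof (induction f rule: TPc.induct)
  case (TPc_base a t)
  from TPc_base.prems show ?case
  proof (induction g rule: TPc.induct)
    case (TPc_base b s)
    have "(\<lambda>x. (a * b) * cis ((t + s) \<bullet> x)) \<in> TPc" by (rule TPc.TPc_base)
    moreover have "(\<lambda>x. (a * b) * cis ((t + s) \<bullet> x)) = (\<lambda>x. a * cis (t \<bullet> x) * (b * cis (s \<bullet> x)))"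
      by (auto simp: inner_add_left cis_mult[symmetric] algebra_simps)
    ultimately show ?case by simp
  next
    case (TPc_add f g)
    then show ?case by (simp add: distrib_left TPc.TPc_add)
  qed
next
  case (TPc_add f1 f2)
  then show ?case by (simp add: distrib_right TPc.TPc_add)
qed

lemma TPc_scale: "f \<in> TPc \<Longrightarrow> (\<lambda>x. c * f x) \<in> TPc"
  using TPc_mult[OF TPc_const] by blast

lemma TPc_sum: "finite I \<Longrightarrow> (\<And>i. i \<in> I \<Longrightarrow> f i \<in> TPc) \<Longrightarrow> (\<lambda>x. \<Sum>i\<in>I. f i x) \<in> TPc"
proof (induction I rule: finite_induct)
  case empty
  then show ?case using TPc_const[of 0] by simp
next
  case (insert i I)
  then show ?case by (simp add: TPc_add)
qed

lemma TPc_cos: "(\<lambda>x. complex_of_real (cos (t \<bullet> x))) \<in> TPc"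
proof -
  have "(\<lambda>x. (\<lambda>x. (1/2) * cis (t \<bullet> x)) x + (\<lambda>x. (1/2) * cis ((-t) \<bullet> x)) x) \<in> TPc"
    by (intro TPc_add TPc_base)
  moreover have "(\<lambda>x. (\<lambda>x. (1/2) * cis (t \<bullet> x)) x + (\<lambda>x. (1/2) * cis ((-t) \<bullet> x)) x)
      = (\<lambda>x. complex_of_real (cos (t \<bullet> x)))"
    by (auto simp: complex_eq_iff)
  ultimately show ?thesis by simp
qed

lemma TPc_sin: "(\<lambda>x. complex_of_real (sin (t \<bullet> x))) \<in> TPc"
proof -
  have "(\<lambda>x. (\<lambda>x. (-\<i>/2) * cis (t \<bullet> x)) x + (\<lambda>x. (\<i>/2) * cis ((-t) \<bullet> x)) x) \<in> TPc"
    by (intro TPc_add TPc_base)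
  moreover have "(\<lambda>x. (\<lambda>x. (-\<i>/2) * cis (t \<bullet> x)) x + (\<lambda>x. (\<i>/2) * cis ((-t) \<bullet> x)) x)
      = (\<lambda>x. complex_of_real (sin (t \<bullet> x)))"
    by (auto simp: complex_eq_iff)
  ultimately show ?thesis by simp
qed

definition torus :: "real \<Rightarrow> 'e::euclidean_space \<Rightarrow> 'e \<times> 'e" where
  "torus c x = ((\<Sum>b\<in>Basis. cos ((x \<bullet> b) / c) *\<^sub>R b), (\<Sum>b\<in>Basis. sin ((x \<bullet> b) / c) *\<^sub>R b))"

lemma torus_fst: "b \<in> Basis \<Longrightarrow> fst (torus c x) \<bullet> b = cos ((x \<bullet> b) / c)"
  unfolding torus_def fst_conv by (rule inner_sum_left_Basis)

lemma torus_snd: "b \<in> Basis \<Longrightarrow> snd (torus c x) \<bullet> b = sin ((x \<bullet> b) / c)"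
  unfolding torus_def snd_conv by (rule inner_sum_left_Basis)

lemma linear_pair_expand:
  fixes f :: "'e::euclidean_space \<times> 'e \<Rightarrow> real"
  assumes "bounded_linear f"
  shows "f (u, v) = (\<Sum>b\<in>Basis. (u \<bullet> b) * f (b, 0) + (v \<bullet> b) * f (0, b))"
proof -
  have lin: "linear f" using assms bounded_linear.linear by blast
  have "f (u, v) = f (u, 0) + f (0, v)"
    using linear_add[OF lin, of "(u,0)" "(0,v)"] by simp
  also have "f (u, 0) = (\<Sum>b\<in>Basis. (u \<bullet> b) * f (b, 0))"
  proof -
    have "(u, 0::'e) = (\<Sum>b\<in>Basis. (u \<bullet> b) *\<^sub>R (b, 0::'e))"
      by (simp add: euclidean_representation prod_eq_iff fst_sum snd_sum)
    then have "f (u, 0) = f (\<Sum>b\<in>Basis. (u \<bullet> b) *\<^sub>R (b, 0::'e))" by simp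
    also have "\<dots> = (\<Sum>b\<in>Basis. (u \<bullet> b) * f (b, 0))"
      by (simp only: linear_sum[OF lin] linear_scale[OF lin]) simp
    finally show ?thesis .
  qed
  also have "f (0, v) = (\<Sum>b\<in>Basis. (v \<bullet> b) * f (0, b))"
  proof -
    have "(0::'e, v) = (\<Sum>b\<in>Basis. (v \<bullet> b) *\<^sub>R (0::'e, b))"
      by (simp add: euclidean_representation prod_eq_iff fst_sum snd_sum)
    then have "f (0, v) = f (\<Sum>b\<in>Basis. (v \<bullet> b) *\<^sub>R (0::'e, b))" by simp
    also have "\<dots> = (\<Sum>b\<in>Basis. (v \<bullet> b) * f (0, b))"
      by (simp only: linear_sum[OF lin] linear_scale[OF lin]) simp
    finally show ?thesis .
  qed
  finally show ?thesis by (simp add: sum.distrib)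
qed

lemma torus_poly_TPc:
  fixes P :: "'e::euclidean_space \<times> 'e \<Rightarrow> real"
  assumes "real_polynomial_function P"
  shows "(\<lambda>x. complex_of_real (P (torus c x))) \<in> TPc"
  using assms
proof (induction P rule: real_polynomial_function.induct)
  case (linear f)
  have ib: "((1/c) *\<^sub>R b) \<bullet> x = (x \<bullet> b) / c" for b x :: 'e
    by (simp add: inner_commute divide_inverse mult.commute)
  have pt: "f (torus c x) = (\<Sum>b\<in>Basis. cos ((x \<bullet> b) / c) * f (b, 0) + sin ((x \<bullet> b) / c) * f (0, b))" for x
    using linear_pair_expand[OF linear, of "fst (torus c x)" "snd (torus c x)"]
    by (simp add: torus_fst torus_snd cong: sum.cong)
  have eq: "(\<lambda>x. complex_of_real (f (torus c x))) =
     (\<lambda>x. \<Sum>b\<in>Basis. f (b, 0) * complex_of_real (cos (((1/c) *\<^sub>R b) \<bullet> x))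
                   + f (0, b) * complex_of_real (sin (((1/c) *\<^sub>R b) \<bullet> x)))"
    unfolding pt ib by (simp add: mult.commute)
  show ?case unfolding eq
    by (intro TPc_sum TPc_add TPc_scale TPc_cos TPc_sin) auto
next
  case (const c)
  then show ?case by (simp add: TPc_const)
next
  case (add f g)
  then show ?case by (simp add: TPc_add)
next
  case (mult f g)
  then show ?case by (simp add: TPc_mult)
qed


lemma borel_meas_cong:
  assumes "sets M = sets borel" "f \<in> borel_measurable borel"
  shows "f \<in> borel_measurable M"
  using assms measurable_cong_sets[OF assms(1) refl] by simp

lemma TPc_integral:
  fixes \<mu> \<nu> :: "'e::euclidean_space measure"
  assumes fin: "finite_measure \<mu>" "finite_measure \<nu>"
    and sets: "sets \<mu> = sets borel" "sets \<nu> = sets borel"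
    and ch: "\<And>t. (\<integral>x. cis (t \<bullet> x) \<partial>\<mu>) = (\<integral>x. cis (t \<bullet> x) \<partial>\<nu>)"
    and f: "f \<in> TPc"
  shows "integrable \<mu> f \<and> integrable \<nu> f \<and> integral\<^sup>L \<mu> f = integral\<^sup>L \<nu> f"
  using f
proof (induction f rule: TPc.induct)
  case (TPc_base a t)
  have m: "(\<lambda>x. a * cis (t \<bullet> x)) \<in> borel_measurable borel"
    by (intro borel_measurable_continuous_onI continuous_intros)
  have int: "integrable M (\<lambda>x. a * cis (t \<bullet> x))" if "finite_measure M" "sets M = sets borel" for M
  proof (rule finite_measure.integrable_const_bound[OF that(1), where B="norm a"])
    show "AE x in M. norm (a * cis (t \<bullet> x)) \<le> norm a" by (simp add: norm_mult)
    show "(\<lambda>x. a * cis (t \<bullet> x)) \<in> borel_measurable M" using borel_meas_cong[OF that(2) m] .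
  qed
  show ?case using int[OF fin(1) sets(1)] int[OF fin(2) sets(2)] ch[of t] by simp
next
  case (TPc_add f g)
  then show ?case by simp
qed

lemma TPc_integral_real:
  fixes \<mu> \<nu> :: "'e::euclidean_space measure"
  assumes fin: "finite_measure \<mu>" "finite_measure \<nu>"
    and sets: "sets \<mu> = sets borel" "sets \<nu> = sets borel"
    and ch: "\<And>t. (\<integral>x. cis (t \<bullet> x) \<partial>\<mu>) = (\<integral>x. cis (t \<bullet> x) \<partial>\<nu>)"
    and f: "(\<lambda>x. complex_of_real (p x)) \<in> TPc"
  shows "(\<integral>x. p x \<partial>\<mu>) = (\<integral>x. p x \<partial>\<nu>)"
proof -
  have "complex_of_real (\<integral>x. p x \<partial>\<mu>) = complex_of_real (\<integral>x. p x \<partial>\<nu>)"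
    using TPc_integral[OF assms] by simp
  then show ?thesis by simp
qed

lemma angle_unique:
  fixes a a' :: real
  assumes "\<bar>a\<bar> < pi" "\<bar>a'\<bar> \<le> pi" "cos a = cos a'" "sin a = sin a'"
  shows "a = a'"
proof -
  have "\<bar>a\<bar> = \<bar>a'\<bar>"
    using cos_inj_pi[of "\<bar>a\<bar>" "\<bar>a'\<bar>"] assms by simp
  then consider "a' = a" | "a' = - a" by linarith
  then show ?thesis
  proof cases
    case 2
    then have "sin a = 0" using assms(4) by simp
    moreover have "a = 0"
    proof (rule ccontr)
      assume "a \<noteq> 0"
      then consider "0 < a" | "a < 0" by linarith
      then show False
      proof cases
        case 1 then show False using sin_gt_zero[of a] assms(1) \<open>sin a = 0\<close> by simp
      next
        case 2 then show False using sin_gt_zero[of "-a"] assms(1) \<open>sin a = 0\<close> by simp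
      qed
    qed
    ultimately show ?thesis using 2 by simp
  qed simp
qed

lemma torus_eq_iff:
  "torus c x = torus c y \<longleftrightarrow>
    (\<forall>b\<in>Basis. cos ((x \<bullet> b) / c) = cos ((y \<bullet> b) / c) \<and> sin ((x \<bullet> b) / c) = sin ((y \<bullet> b) / c))"
proof
  assume "torus c x = torus c y"
  then have "fst (torus c x) \<bullet> b = fst (torus c y) \<bullet> b" "snd (torus c x) \<bullet> b = snd (torus c y) \<bullet> b" for b
    by simp_all
  then show "\<forall>b\<in>Basis. cos ((x \<bullet> b) / c) = cos ((y \<bullet> b) / c) \<and> sin ((x \<bullet> b) / c) = sin ((y \<bullet> b) / c)"
    by (metis torus_fst torus_snd)
next
  assume "\<forall>b\<in>Basis. cos ((x \<bullet> b) / c) = cos ((y \<bullet> b) / c) \<and> sin ((x \<bullet> b) / c) = sin ((y \<bullet> b) / c)"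
  then show "torus c x = torus c y"
    unfolding torus_def by (auto intro!: sum.cong)
qed

lemma torus_reduce:
  fixes x :: "'e::euclidean_space"
  assumes c: "c > 0"
  shows "\<exists>x'. (\<forall>b\<in>Basis. \<bar>x' \<bullet> b\<bar> \<le> pi * c) \<and> torus c x' = torus c x"
proof -
  define k where "k b = round ((x \<bullet> b) / c / (2 * pi))" for b
  define y where "y b = (x \<bullet> b) / c - of_int (k b) * (2 * pi)" for b
  define x' where "x' = (\<Sum>b\<in>Basis. (c * y b) *\<^sub>R b)"
  have x'b: "x' \<bullet> b = c * y b" if "b \<in> Basis" for b
    unfolding x'_def using that by (rule inner_sum_left_Basis)
  have yb: "\<bar>y b\<bar> \<le> pi" for b
  proof -
    have "\<bar>of_int (k b) - (x \<bullet> b) / c / (2 * pi)\<bar> \<le> 1/2"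
      unfolding k_def by (rule of_int_round_abs_le)
    then have "\<bar>(of_int (k b) - (x \<bullet> b) / c / (2 * pi)) * (2 * pi)\<bar> \<le> 1/2 * (2 * pi)"
      by (simp add: abs_mult)
    moreover have "(of_int (k b) - (x \<bullet> b) / c / (2 * pi)) * (2 * pi) = - y b"
      unfolding y_def by (simp add: field_simps)
    ultimately show ?thesis by simp
  qed
  have "cos (y b) = cos ((x \<bullet> b) / c)" "sin (y b) = sin ((x \<bullet> b) / c)" for b
    unfolding y_def using cos.plus_of_int[of "(x \<bullet> b) / c" "- k b"] sin.plus_of_int[of "(x \<bullet> b) / c" "- k b"]
    by (simp_all add: algebra_simps)
  then have "torus c x' = torus c x"
    unfolding torus_eq_iff using c by (simp add: x'b)
  moreover have "\<forall>b\<in>Basis. \<bar>x' \<bullet> b\<bar> \<le> pi * c"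
    using yb c by (simp add: x'b abs_mult mult.commute)
  ultimately show ?thesis by blast
qed

lemma torus_inj_interior:
  fixes x y :: "'e::euclidean_space"
  assumes c: "c > 0" and x: "\<forall>b\<in>Basis. \<bar>x \<bullet> b\<bar> < pi * c" and y: "\<forall>b\<in>Basis. \<bar>y \<bullet> b\<bar> \<le> pi * c"
    and eq: "torus c x = torus c y"
  shows "x = y"
proof (rule euclidean_eqI)
  fix b :: 'e assume b: "b \<in> Basis"
  have "\<bar>(x \<bullet> b) / c\<bar> < pi" using x b c by (simp add: divide_less_eq)
  moreover have "\<bar>(y \<bullet> b) / c\<bar> \<le> pi" using y b c by (simp add: divide_le_eq)
  ultimately have "(x \<bullet> b) / c = (y \<bullet> b) / c"
    using angle_unique eq b unfolding torus_eq_iff by blast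
  then show "x \<bullet> b = y \<bullet> b" using c by simp
qed

lemma continuous_torus: "c \<noteq> 0 \<Longrightarrow> continuous_on UNIV (torus c)"
  unfolding torus_def by (intro continuous_intros) auto


lemma approx_torus:
  fixes f :: "'e::euclidean_space \<Rightarrow> real"
  assumes cont: "continuous_on UNIV f" and bnd: "\<And>x. \<bar>f x\<bar> \<le> B"
    and supp: "\<And>x. rr \<le> norm x \<Longrightarrow> f x = 0"
    and c: "c > 0" "rr < pi * c" and e: "e > 0"
  obtains P where "real_polynomial_function P"
    "\<And>x. (\<forall>b\<in>Basis. \<bar>x \<bullet> b\<bar> \<le> pi * c) \<Longrightarrow> \<bar>f x - P (torus c x)\<bar> < e"
    "\<And>x. \<bar>P (torus c x)\<bar> \<le> B + e"
proof -
  define K where "K = cbox (-(pi * c) *\<^sub>R One) ((pi * c) *\<^sub>R (One::'e))"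
  have K: "x \<in> K \<longleftrightarrow> (\<forall>b\<in>Basis. \<bar>x \<bullet> b\<bar> \<le> pi * c)" for x
    unfolding K_def mem_box by (auto simp: abs_le_iff)
  have cK: "compact K" unfolding K_def by simp
  define S where "S = torus c ` K"
  have ctor: "continuous_on UNIV (torus c :: 'e \<Rightarrow> 'e \<times> 'e)" by (rule continuous_torus) (use c in simp)
  have cS: "compact S" unfolding S_def
    using compact_continuous_image[OF continuous_on_subset[OF ctor] cK] by simp
  have wd: "f x = f y" if "x \<in> K" "y \<in> K" "torus c x = torus c y" for x y
  proof (cases "\<forall>b\<in>Basis. \<bar>x \<bullet> b\<bar> < pi * c")
    case True
    then have "x = y" using torus_inj_interior[OF c(1) True] that K by blast
    then show ?thesis by simp
  next
    case False
    then obtain b where b: "b \<in> Basis" "\<not> \<bar>x \<bullet> b\<bar> < pi * c" by blast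
    then have "rr \<le> norm x" using Basis_le_norm[OF b(1), of x] c by linarith
    then have fx: "f x = 0" by (rule supp)
    show ?thesis
    proof (cases "\<forall>b\<in>Basis. \<bar>y \<bullet> b\<bar> < pi * c")
      case True
      then have "y = x" using torus_inj_interior[OF c(1) True] that K by metis
      then show ?thesis by simp
    next
      case False
      then obtain b where b: "b \<in> Basis" "\<not> \<bar>y \<bullet> b\<bar> < pi * c" by blast
      then have "rr \<le> norm y" using Basis_le_norm[OF b(1), of y] c by linarith
      then have "f y = 0" by (rule supp)
      then show ?thesis using fx by simp
    qed
  qed
  define g where "g y = f (SOME x. x \<in> K \<and> torus c x = y)" for y
  have g: "g (torus c x) = f x" if "x \<in> K" for x
  proof -
    have "\<exists>x'. x' \<in> K \<and> torus c x' = torus c x" using that by blast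
    then have "(SOME x'. x' \<in> K \<and> torus c x' = torus c x) \<in> K \<and>
        torus c (SOME x'. x' \<in> K \<and> torus c x' = torus c x) = torus c x"
      by (rule someI_ex)
    then show ?thesis unfolding g_def using wd that by blast
  qed
  have cg: "continuous_on S g"
    unfolding continuous_on_closed_vimage[OF compact_imp_closed[OF cS]]
  proof (intro allI impI)
    fix T :: "real set" assume T: "closed T"
    have eq: "g -` T \<inter> S = torus c ` (K \<inter> f -` T)"
      unfolding S_def using g by force
    have "closed (f -` T)"
      by (rule continuous_closed_vimage[OF T]) (use cont in \<open>simp add: continuous_on_eq_continuous_at\<close>)
    then have "compact (K \<inter> f -` T)" using compact_Int_closed cK by blast
    then have "compact (torus c ` (K \<inter> f -` T))"
      using compact_continuous_image[OF continuous_on_subset[OF ctor]] by blast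
    then show "closed (g -` T \<inter> S)" unfolding eq by (rule compact_imp_closed)
  qed
  obtain P where P: "real_polynomial_function P" "\<And>y. y \<in> S \<Longrightarrow> \<bar>g y - P y\<bar> < e"
    using Stone_Weierstrass_real_polynomial_function[OF cS cg e] by blast
  show ?thesis
  proof (rule that[OF P(1)])
    fix x :: 'e assume "\<forall>b\<in>Basis. \<bar>x \<bullet> b\<bar> \<le> pi * c"
    then have x: "x \<in> K" using K by blast
    show "\<bar>f x - P (torus c x)\<bar> < e" using P(2)[of "torus c x"] g[OF x] x unfolding S_def by simp
  next
    fix x :: 'e
    obtain x' where x': "\<forall>b\<in>Basis. \<bar>x' \<bullet> b\<bar> \<le> pi * c" "torus c x' = torus c x"
      using torus_reduce[OF c(1)] by blast
    then have x'K: "x' \<in> K" using K by blast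
    have "\<bar>g (torus c x') - P (torus c x')\<bar> < e" using P(2) x'K unfolding S_def by blast
    then have "\<bar>P (torus c x')\<bar> \<le> \<bar>f x'\<bar> + e" using g[OF x'K] by linarith
    then show "\<bar>P (torus c x)\<bar> \<le> B + e" using bnd[of x'] x'(2) by simp
  qed
qed


lemma tail_small:
  fixes M :: "'e::euclidean_space measure"
  assumes "finite_measure M" "sets M = sets borel"
  shows "(\<lambda>n. measure M {x. real n < norm x}) \<longlonglongrightarrow> 0"
proof -
  interpret finite_measure M by fact
  have "(\<lambda>n. measure M {x. real n < norm x}) \<longlonglongrightarrow> measure M (\<Inter>n. {x. real n < norm x})"
  proof (rule finite_Lim_measure_decseq)
    have "{x::'e. real n < norm x} \<in> sets borel" for n
      by (intro borel_open open_Collect_less continuous_intros)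
    then show "range (\<lambda>n. {x::'e. real n < norm x}) \<subseteq> sets M" using assms(2) by blast
    show "decseq (\<lambda>n. {x::'e. real n < norm x})"
      unfolding decseq_def by (auto intro: le_less_trans)
  qed
  moreover have "(\<Inter>n. {x::'e. real n < norm x}) = {}"
  proof -
    have "x \<notin> (\<Inter>n. {x. real n < norm x})" for x :: 'e
    proof
      assume a: "x \<in> (\<Inter>n. {x. real n < norm x})"
      obtain n where "norm x < real n" using reals_Archimedean2 by blast
      moreover have "real n < norm x" using a by blast
      ultimately show False by linarith
    qed
    then show ?thesis by blast
  qed
  ultimately show ?thesis by simp
qed

lemma CW_cont:
  fixes \<mu> \<nu> :: "'e::euclidean_space measure" and f :: "'e \<Rightarrow> real"
  assumes fin: "finite_measure \<mu>" "finite_measure \<nu>"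
    and sets: "sets \<mu> = sets borel" "sets \<nu> = sets borel"
    and ch: "\<And>t. (\<integral>x. cis (t \<bullet> x) \<partial>\<mu>) = (\<integral>x. cis (t \<bullet> x) \<partial>\<nu>)"
    and cont: "continuous_on UNIV f" and bnd: "\<And>x. \<bar>f x\<bar> \<le> B"
  shows "(\<integral>x. f x \<partial>\<mu>) = (\<integral>x. f x \<partial>\<nu>)"
proof -
  have B0: "0 \<le> B" using abs_ge_zero[of "f 0"] bnd[of 0] by linarith
  define C where "C = measure \<mu> (space \<mu>) + measure \<nu> (space \<nu>) + 2 * (2 * B + 1) + 1"
  have C0: "C > 0" unfolding C_def using B0 measure_nonneg[of \<mu> "space \<mu>"] measure_nonneg[of \<nu> "space \<nu>"] by (smt (verit))
  have fm: "f \<in> borel_measurable borel" using cont by (rule borel_measurable_continuous_onI)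
  have key: "\<bar>(\<integral>x. f x \<partial>\<mu>) - (\<integral>x. f x \<partial>\<nu>)\<bar> \<le> e * C" if e: "0 < e" "e \<le> 1" for e
  proof -
    have ev: "eventually (\<lambda>n. measure \<mu> {x. real n < norm x} < e \<and> measure \<nu> {x. real n < norm x} < e) sequentially"
      using order_tendstoD(2)[OF tail_small[OF fin(1) sets(1)] e(1)]
            order_tendstoD(2)[OF tail_small[OF fin(2) sets(2)] e(1)]
      by (rule eventually_conj)
    then obtain n where n: "measure \<mu> {x. real n < norm x} < e" "measure \<nu> {x. real n < norm x} < e"
      by (auto simp: eventually_sequentially)
    define r where "r = real n"
    have r0: "0 \<le> r" unfolding r_def by simp
    define f' where "f' x = f x * max 0 (min 1 (r + 1 - norm x))" for x
    have cf': "continuous_on UNIV f'" unfolding f'_def by (intro continuous_intros cont)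
    have bf': "\<bar>f' x\<bar> \<le> B" for x
    proof -
      have "\<bar>f' x\<bar> = \<bar>f x\<bar> * max 0 (min 1 (r + 1 - norm x))" unfolding f'_def by (simp add: abs_mult)
      also have "\<dots> \<le> B * 1" using B0 by (intro mult_mono bnd) auto
      finally show ?thesis by simp
    qed
    have sf': "f' x = 0" if "r + 1 \<le> norm x" for x using that unfolding f'_def by simp
    have ff': "f' x = f x" if "norm x \<le> r" for x
    proof -
      have "min 1 (r + 1 - norm x) = 1" using that by linarith
      then show ?thesis unfolding f'_def by simp
    qed
    define c where "c = (r + 2) / pi"
    have pc: "pi * c = r + 2" unfolding c_def by simp
    have c: "c > 0" "r + 1 < pi * c" unfolding pc using r0 unfolding c_def by (simp_all add: divide_pos_pos add_nonneg_pos)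
    obtain P where P: "real_polynomial_function P"
      "\<And>x. (\<forall>b\<in>Basis. \<bar>x \<bullet> b\<bar> \<le> pi * c) \<Longrightarrow> \<bar>f' x - P (torus c x)\<bar> < e"
      "\<And>x. \<bar>P (torus c x)\<bar> \<le> B + e"
    proof -
      show thesis
        apply (rule approx_torus[where rr="r + 1", OF cf' bf' sf' c e(1)])
         apply simp
        apply (rule that)
          apply assumption+
        done
    qed
    define p where "p x = P (torus c x)" for x
    have pT: "(\<lambda>x. complex_of_real (p x)) \<in> TPc" unfolding p_def by (rule torus_poly_TPc[OF P(1)])
    have pint: "(\<integral>x. p x \<partial>\<mu>) = (\<integral>x. p x \<partial>\<nu>)" by (rule TPc_integral_real[OF fin sets ch pT])
    have pm: "p \<in> borel_measurable borel"
      unfolding p_def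
      using P(1) c by (intro borel_measurable_continuous_onI continuous_on_compose2[OF continuous_on_polymonial_function continuous_torus]) (auto simp: real_polynomial_function_eq)
    define A where "A = {x::'e. r < norm x}"
    have pw: "\<bar>f x - p x\<bar> \<le> e + (2 * B + e) * indicator A x" for x
    proof (cases "norm x \<le> r")
      case True
      have "\<forall>b\<in>Basis. \<bar>x \<bullet> b\<bar> \<le> pi * c"
      proof
        fix b :: 'e assume "b \<in> Basis"
        then show "\<bar>x \<bullet> b\<bar> \<le> pi * c" using Basis_le_norm[of b x] True c(2) by linarith
      qed
      then have "\<bar>f' x - p x\<bar> < e" using P(2) unfolding p_def by blast
      then show ?thesis using ff'[OF True] True unfolding A_def by simp
    next
      case False
      have "\<bar>f x - p x\<bar> \<le> \<bar>f x\<bar> + \<bar>p x\<bar>" by simp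
      also have "\<dots> \<le> B + (B + e)" using bnd[of x] P(3)[of x] unfolding p_def by linarith
      finally show ?thesis using False e unfolding A_def by simp
    qed
    have est: "\<bar>(\<integral>x. f x \<partial>M) - (\<integral>x. p x \<partial>M)\<bar> \<le> e * measure M (space M) + (2 * B + e) * e"
      if M: "finite_measure M" "sets M = sets borel" "measure M A < e" for M
    proof -
      interpret finite_measure M by fact
      have fM: "f \<in> borel_measurable M" "p \<in> borel_measurable M" using borel_meas_cong[OF M(2)] fm pm by auto
      have Am: "A \<in> sets M" unfolding A_def using M(2) by simp
      have fi: "integrable M f" by (rule integrable_const_bound[where B=B]) (use bnd fM in auto)
      have pi': "integrable M p" by (rule integrable_const_bound[where B="B+e"]) (use P(3) fM in \<open>auto simp: p_def\<close>)
      have i1: "integrable M (indicator A :: 'e \<Rightarrow> real)"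
        using Am by (intro integrable_real_indicator) (simp_all add: less_top[symmetric])
      then have ii: "integrable M (\<lambda>x. e + (2 * B + e) * indicator A x)"
        by simp
      have "\<bar>(\<integral>x. f x \<partial>M) - (\<integral>x. p x \<partial>M)\<bar> = \<bar>\<integral>x. f x - p x \<partial>M\<bar>"
        using fi pi' by simp
      also have "\<dots> \<le> (\<integral>x. \<bar>f x - p x\<bar> \<partial>M)" by (rule integral_abs_bound)
      also have "\<dots> \<le> (\<integral>x. e + (2 * B + e) * indicator A x \<partial>M)"
        by (rule integral_mono) (use fi pi' ii pw in auto)
      also have "\<dots> = e * measure M (space M) + (2 * B + e) * measure M A"
      proof -
        have "(\<integral>x. e + (2 * B + e) * indicator A x \<partial>M) = (\<integral>x. e \<partial>M) + (\<integral>x. (2 * B + e) * indicator A x \<partial>M)"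
          by (rule Bochner_Integration.integral_add) (use i1 in auto)
        also have "(\<integral>x. (2 * B + e) * indicator A x \<partial>M) = (2 * B + e) * (\<integral>x. indicator A x \<partial>M)"
          by (rule Bochner_Integration.integral_mult_right) (rule i1)
        also have "(\<integral>x. indicator A x \<partial>M) = measure M A"
          using Am by (simp add: sets.Int_space_eq2)
        finally show ?thesis by (simp add: mult.commute)
      qed
      also have "\<dots> \<le> e * measure M (space M) + (2 * B + e) * e"
        using M(3) B0 e by (intro add_left_mono mult_left_mono) auto
      finally show ?thesis .
    qed
    have e1: "\<bar>(\<integral>x. f x \<partial>\<mu>) - (\<integral>x. p x \<partial>\<mu>)\<bar> \<le> e * measure \<mu> (space \<mu>) + (2 * B + e) * e"
      using est[OF fin(1) sets(1)] n(1) unfolding A_def r_def by simp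
    have e2: "\<bar>(\<integral>x. f x \<partial>\<nu>) - (\<integral>x. p x \<partial>\<nu>)\<bar> \<le> e * measure \<nu> (space \<nu>) + (2 * B + e) * e"
      using est[OF fin(2) sets(2)] n(2) unfolding A_def r_def by simp
    have "(2 * B + e) * e \<le> (2 * B + 1) * e" using e by (intro mult_right_mono) auto
    then have "\<bar>(\<integral>x. f x \<partial>\<mu>) - (\<integral>x. f x \<partial>\<nu>)\<bar> \<le> e * measure \<mu> (space \<mu>) + e * measure \<nu> (space \<nu>) + 2 * (2 * B + 1) * e"
      using e1 e2 pint by linarith
    also have "\<dots> \<le> e * C" unfolding C_def using e by (simp add: algebra_simps)
    finally show ?thesis .
  qed
  have "\<bar>(\<integral>x. f x \<partial>\<mu>) - (\<integral>x. f x \<partial>\<nu>)\<bar> \<le> 0"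
  proof (rule field_le_epsilon)
    fix d :: real assume d: "0 < d"
    define e where "e = min 1 (d / C)"
    have e: "0 < e" "e \<le> 1" unfolding e_def using d C0 by auto
    have "e * C \<le> (d / C) * C" unfolding e_def using C0 by (intro mult_right_mono) auto
    then show "\<bar>(\<integral>x. f x \<partial>\<mu>) - (\<integral>x. f x \<partial>\<nu>)\<bar> \<le> 0 + d" using key[OF e] C0 by simp
  qed
  then show ?thesis by simp
qed


lemma CW_unique:
  fixes \<mu> \<nu> :: "'e::euclidean_space measure"
  assumes fin: "finite_measure \<mu>" "finite_measure \<nu>"
    and sets: "sets \<mu> = sets borel" "sets \<nu> = sets borel"
    and ch: "\<And>t. (\<integral>x. cis (t \<bullet> x) \<partial>\<mu>) = (\<integral>x. cis (t \<bullet> x) \<partial>\<nu>)"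
  shows "\<mu> = \<nu>"
proof -
  have cl: "measure \<mu> F = measure \<nu> F" if F: "closed F" for F :: "'e set"
  proof (cases "F = {}")
    case True then show ?thesis by simp
  next
    case False
    define h where "h n x = max 0 (1 - real n * infdist x F)" for n :: nat and x :: 'e
    have hc: "continuous_on UNIV (h n)" for n unfolding h_def by (intro continuous_intros)
    have hb: "\<bar>h n x\<bar> \<le> 1" for n x
    proof -
      have "0 \<le> real n * infdist x F" by (simp add: infdist_nonneg)
      then show ?thesis unfolding h_def by simp
    qed
    have eqn: "(\<integral>x. h n x \<partial>\<mu>) = (\<integral>x. h n x \<partial>\<nu>)" for n
      by (rule CW_cont[OF fin sets ch hc hb])
    have lim: "(\<lambda>n. \<integral>x. h n x \<partial>M) \<longlonglongrightarrow> measure M F"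
      if M: "finite_measure M" "sets M = sets borel" for M
    proof -
      interpret finite_measure M by fact
      have sp: "space M = UNIV" using sets_eq_imp_space_eq[OF M(2)] by simp
      have Fm: "F \<in> sets M" using M(2) F by simp
      have "(\<lambda>n. integral\<^sup>L M (h n)) \<longlonglongrightarrow> integral\<^sup>L M (indicator F)"
      proof (rule integral_dominated_convergence[where w="\<lambda>_. 1"])
        show "indicator F \<in> borel_measurable M" using Fm by simp
        show "h n \<in> borel_measurable M" for n
          using borel_meas_cong[OF M(2) borel_measurable_continuous_onI[OF hc]] .
        show "integrable M (\<lambda>_. 1::real)" by simp
        show "AE x in M. norm (h n x) \<le> 1" for n using hb by simp
        show "AE x in M. (\<lambda>n. h n x) \<longlonglongrightarrow> indicator F x"
        proof (rule AE_I2)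
          fix x :: 'e
          show "(\<lambda>n. h n x) \<longlonglongrightarrow> indicator F x"
          proof (cases "x \<in> F")
            case True
            then have "infdist x F = 0" using in_closed_iff_infdist_zero[OF F False] by simp
            then show ?thesis using True unfolding h_def by simp
          next
            case xF: False
            then have d: "infdist x F > 0"
              using in_closed_iff_infdist_zero[OF F False] infdist_nonneg[of x F] by simp
            obtain N :: nat where N: "1 / infdist x F < real N" using reals_Archimedean2 by blast
            have "eventually (\<lambda>n. h n x = 0) sequentially"
              unfolding eventually_sequentially
            proof (intro exI allI impI)
              fix n assume "N \<le> n"
              then have "1 / infdist x F < real n" using N by linarith
              then have "1 < real n * infdist x F" using d by (simp add: divide_less_eq)
              then show "h n x = 0" unfolding h_def by simp
            qed
            then have "(\<lambda>n. h n x) \<longlonglongrightarrow> 0" by (rule tendsto_eventually)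
            then show ?thesis using xF by simp
          qed
        qed
      qed
      moreover have "integral\<^sup>L M (indicator F) = measure M F"
        using Fm by (simp add: sets.Int_space_eq2)
      ultimately show ?thesis by simp
    qed
    show ?thesis
      using LIMSEQ_unique[OF lim[OF fin(1) sets(1)]] lim[OF fin(2) sets(2)] eqn by simp
  qed
  have sc: "sets borel = sigma_sets (UNIV::'e set) (Collect closed)"
    by (subst borel_eq_closed) simp
  show ?thesis
  proof (rule measure_eqI_generator_eq[where E="Collect closed" and \<Omega>=UNIV and A="\<lambda>_. UNIV"])
    show "Int_stable (Collect closed :: 'e set set)" by (auto simp: Int_stable_def)
    show "Collect closed \<subseteq> Pow (UNIV :: 'e set)" by simp
    show "emeasure \<mu> X = emeasure \<nu> X" if "X \<in> Collect closed" for X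
      using cl[of X] that finite_measure.emeasure_eq_measure[OF fin(1)] finite_measure.emeasure_eq_measure[OF fin(2)]
      by simp
    show "sets \<mu> = sigma_sets UNIV (Collect closed)" using sets(1) sc by simp
    show "sets \<nu> = sigma_sets UNIV (Collect closed)" using sets(2) sc by simp
    show "range (\<lambda>_. UNIV) \<subseteq> Collect (closed :: 'e set \<Rightarrow> bool)" by auto
    show "(\<Union>i::nat. UNIV) = (UNIV :: 'e set)" by simp
    show "emeasure \<mu> UNIV \<noteq> \<infinity>" for i :: nat using finite_measure.emeasure_finite[OF fin(1)] by simp
  qed
qed



lemma normal_char:
  assumes M: "prob_space M" and X: "distributed M lborel X (normal_density mu s)" and s: "s > 0"
  shows "(\<integral>\<omega>. cis (X \<omega>) \<partial>M) = cis mu * complex_of_real (exp (- (s^2) / 2))"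
proof -
  interpret prob_space M by fact
  define Y where "Y \<omega> = (X \<omega> - mu) / s" for \<omega>
  have Yd: "distributed M lborel Y std_normal_density"
    using X normal_standard_normal_convert[OF s, of X mu] unfolding Y_def by simp
  have Ym: "Y \<in> measurable M lborel" using Yd by (simp add: distributed_def)
  have dY: "distr M lborel Y = std_normal_distribution" using Yd by (simp add: distributed_def)
  have XY: "X \<omega> = mu + s * Y \<omega>" for \<omega> unfolding Y_def using s by simp
  have "(\<integral>\<omega>. cis (X \<omega>) \<partial>M) = (\<integral>\<omega>. cis mu * iexp (s * Y \<omega>) \<partial>M)"
    unfolding XY by (simp add: cis_conv_exp exp_add[symmetric] algebra_simps)
  also have "\<dots> = cis mu * (\<integral>\<omega>. iexp (s * Y \<omega>) \<partial>M)" by simp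
  also have "(\<integral>\<omega>. iexp (s * Y \<omega>) \<partial>M) = (\<integral>y. iexp (s * y) \<partial>(distr M lborel Y))"
    by (rule integral_distr[symmetric]) (use Ym in auto)
  also have "\<dots> = char std_normal_distribution s" unfolding dY char_def by simp
  also have "\<dots> = exp (- (s^2) / 2)" by (simp add: char_std_normal_distribution)
  finally show ?thesis by simp
qed

lemma gauss_char:
  fixes Z :: "'a \<Rightarrow> real^'m::finite"
  assumes M: "prob_space M" and g: "gaussian_vec M Z m C"
  shows "(\<integral>\<omega>. cis (a \<bullet> Z \<omega>) \<partial>M) = cis (a \<bullet> m) * complex_of_real (exp (- (a \<bullet> (C *v a)) / 2))"
proof -
  interpret prob_space M by fact
  have Zm: "Z \<in> borel_measurable M" and nn: "0 \<le> a \<bullet> (C *v a)"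
    and cases: "if a \<bullet> (C *v a) = 0 then (AE \<omega> in M. a \<bullet> Z \<omega> = a \<bullet> m)
          else distributed M lborel (\<lambda>\<omega>. a \<bullet> Z \<omega>) (normal_density (a \<bullet> m) (sqrt (a \<bullet> (C *v a))))"
    using g unfolding gaussian_vec_def by auto
  show ?thesis
  proof (cases "a \<bullet> (C *v a) = 0")
    case True
    then have ae: "AE \<omega> in M. a \<bullet> Z \<omega> = a \<bullet> m" using cases by simp
    have cm: "(\<lambda>\<omega>. cis (a \<bullet> Z \<omega>)) \<in> borel_measurable M"
      by (rule measurable_compose[OF Zm borel_measurable_continuous_onI]) (intro continuous_intros)
    have "(\<integral>\<omega>. cis (a \<bullet> Z \<omega>) \<partial>M) = (\<integral>\<omega>. cis (a \<bullet> m) \<partial>M)"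
      by (rule integral_cong_AE) (use cm ae in auto)
    also have "\<dots> = cis (a \<bullet> m)" by (simp add: prob_space)
    finally show ?thesis using True by simp
  next
    case False
    then have v: "a \<bullet> (C *v a) > 0" using nn by simp
    have d: "distributed M lborel (\<lambda>\<omega>. a \<bullet> Z \<omega>) (normal_density (a \<bullet> m) (sqrt (a \<bullet> (C *v a))))"
      using cases False by simp
    show ?thesis using normal_char[OF M d] v by simp
  qed
qed

lemma indep_from_char:
  fixes U :: "'a \<Rightarrow> 'u::euclidean_space" and V :: "'a \<Rightarrow> 'v::euclidean_space"
  assumes M: "prob_space M" and Um: "U \<in> borel_measurable M" and Vm: "V \<in> borel_measurable M"
    and ch: "\<And>a b. (\<integral>\<omega>. cis (a \<bullet> U \<omega> + b \<bullet> V \<omega>) \<partial>M) = (\<integral>\<omega>. cis (a \<bullet> U \<omega>) \<partial>M) * (\<integral>\<omega>. cis (b \<bullet> V \<omega>) \<partial>M)"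
  shows "indep_rv M U V"
proof -
  interpret prob_space M by fact
  define MU where "MU = distr M borel U"
  define MV where "MV = distr M borel V"
  define \<mu> where "\<mu> = distr M borel (\<lambda>\<omega>. (U \<omega>, V \<omega>))"
  define \<nu> where "\<nu> = MU \<Otimes>\<^sub>M MV"
  have pU: "prob_space MU" unfolding MU_def by (rule prob_space_distr[OF Um])
  have pV: "prob_space MV" unfolding MV_def by (rule prob_space_distr[OF Vm])
  interpret U: prob_space MU by fact
  interpret V: prob_space MV by fact
  interpret UV: pair_prob_space MU MV by unfold_locales
  have UVm: "(\<lambda>\<omega>. (U \<omega>, V \<omega>)) \<in> borel_measurable M"
  proof -
    have "(\<lambda>\<omega>. (U \<omega>, V \<omega>)) \<in> measurable M (borel \<Otimes>\<^sub>M borel)"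
      using Um Vm by (rule measurable_Pair)
    then show ?thesis by (simp add: borel_prod)
  qed
  have sU: "sets MU = sets borel" unfolding MU_def by simp
  have sV: "sets MV = sets borel" unfolding MV_def by simp
  have snu: "sets \<nu> = sets borel"
  proof -
    have "sets \<nu> = sets (borel \<Otimes>\<^sub>M borel :: ('u \<times> 'v) measure)"
      unfolding \<nu>_def by (rule sets_pair_measure_cong[OF sU sV])
    then show ?thesis using borel_prod[where 'a='u and 'b='v] by metis
  qed
  have smu: "sets \<mu> = sets borel" unfolding \<mu>_def by simp
  have fmu: "finite_measure \<mu>" unfolding \<mu>_def
    using prob_space_distr[OF UVm] unfolding prob_space_def by blast
  have fnu: "finite_measure \<nu>" unfolding \<nu>_def using UV.P.finite_measure_axioms .
  have cmeas: "(\<lambda>x. cis (t \<bullet> x)) \<in> borel_measurable borel" for t :: "'w::euclidean_space"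
    by (intro borel_measurable_continuous_onI continuous_intros)
  have chU: "(\<integral>x. cis (a \<bullet> x) \<partial>MU) = (\<integral>\<omega>. cis (a \<bullet> U \<omega>) \<partial>M)" for a
    unfolding MU_def by (rule integral_distr[OF Um cmeas])
  have chV: "(\<integral>x. cis (a \<bullet> x) \<partial>MV) = (\<integral>\<omega>. cis (a \<bullet> V \<omega>) \<partial>M)" for a
    unfolding MV_def by (rule integral_distr[OF Vm cmeas])
  have eq: "\<mu> = \<nu>"
  proof (rule CW_unique[OF fmu fnu smu snu])
    fix t :: "'u \<times> 'v"
    obtain a b where t: "t = (a, b)" by (cases t)
    have "(\<integral>x. cis (t \<bullet> x) \<partial>\<mu>) = (\<integral>\<omega>. cis (t \<bullet> (U \<omega>, V \<omega>)) \<partial>M)"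
      unfolding \<mu>_def by (rule integral_distr[OF UVm cmeas])
    also have "\<dots> = (\<integral>\<omega>. cis (a \<bullet> U \<omega> + b \<bullet> V \<omega>) \<partial>M)" unfolding t by simp
    also have "\<dots> = (\<integral>x. cis (a \<bullet> x) \<partial>MU) * (\<integral>x. cis (b \<bullet> x) \<partial>MV)"
      unfolding ch chU chV ..
    also have "\<dots> = (\<integral>x. (\<integral>y. cis (a \<bullet> x) * cis (b \<bullet> y) \<partial>MV) \<partial>MU)"
      by simp
    also have "\<dots> = (\<integral>(x, y). cis (a \<bullet> x) * cis (b \<bullet> y) \<partial>\<nu>)"
      unfolding \<nu>_def
    proof (rule UV.integral_fst)
      have eqf: "(\<lambda>(x, y). cis (a \<bullet> x) * cis (b \<bullet> y)) = (\<lambda>z::'u \<times> 'v. cis (a \<bullet> fst z) * cis (b \<bullet> snd z))"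
        by auto
      have "(\<lambda>z::'u \<times> 'v. cis (a \<bullet> fst z) * cis (b \<bullet> snd z)) \<in> borel_measurable borel"
        by (intro borel_measurable_continuous_onI continuous_intros)
      then have m: "(\<lambda>(x, y). cis (a \<bullet> x) * cis (b \<bullet> y)) \<in> borel_measurable (MU \<Otimes>\<^sub>M MV)"
        unfolding eqf using borel_meas_cong[OF snu[unfolded \<nu>_def]] by blast
      show "integrable (MU \<Otimes>\<^sub>M MV) (\<lambda>(x, y). cis (a \<bullet> x) * cis (b \<bullet> y))"
        by (rule UV.P.integrable_const_bound[where B=1]) (use m in \<open>auto simp: norm_mult\<close>)
    qed
    also have "\<dots> = (\<integral>x. cis (t \<bullet> x) \<partial>\<nu>)"
    proof -
      have fe: "(\<lambda>(x, y). cis (a \<bullet> x) * cis (b \<bullet> y)) = (\<lambda>z. cis ((a, b) \<bullet> z))"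
        by (rule ext) (auto simp: cis_mult split: prod.splits)
      show ?thesis unfolding t fe ..
    qed
    finally show "(\<integral>x. cis (t \<bullet> x) \<partial>\<mu>) = (\<integral>x. cis (t \<bullet> x) \<partial>\<nu>)" .
  qed
  show ?thesis
    unfolding indep_rv_def
  proof (intro conjI Um Vm ballI)
    fix A B assume A: "A \<in> sets (borel :: 'u measure)" and B: "B \<in> sets (borel :: 'v measure)"
    have AB: "A \<times> B \<in> sets (borel :: ('u \<times> 'v) measure)"
      using pair_measureI[OF A B] borel_prod[where 'a='u and 'b='v] by metis
    have "measure M (U -` A \<inter> V -` B \<inter> space M) = measure M ((\<lambda>\<omega>. (U \<omega>, V \<omega>)) -` (A \<times> B) \<inter> space M)"
      by (rule arg_cong[where f="measure M"]) auto
    also have "\<dots> = measure \<mu> (A \<times> B)" unfolding \<mu>_def by (rule measure_distr[symmetric, OF UVm AB])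
    also have "\<dots> = measure \<nu> (A \<times> B)" unfolding eq ..
    also have "\<dots> = measure MU A * measure MV B"
    proof -
      have "emeasure \<nu> (A \<times> B) = emeasure MU A * emeasure MV B"
        unfolding \<nu>_def by (rule V.emeasure_pair_measure_Times) (use A B sU sV in auto)
      then show ?thesis by (simp add: measure_def enn2real_mult)
    qed
    also have "\<dots> = measure M (U -` A \<inter> space M) * measure M (V -` B \<inter> space M)"
      unfolding MU_def MV_def using measure_distr[OF Um A] measure_distr[OF Vm B] by simp
    finally show "measure M (U -` A \<inter> V -` B \<inter> space M) = measure M (U -` A \<inter> space M) * measure M (V -` B \<inter> space M)" .
  qed
qed




lemma invertible_matrix_inv:
  fixes M :: "real^'n^'m"
  assumes "invertible M"
  shows "M ** matrix_inv M = mat 1" "matrix_inv M ** M = mat 1"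
proof -
  have "\<exists>A'. M ** A' = mat 1 \<and> A' ** M = mat 1" using assms unfolding invertible_def .
  then have "M ** matrix_inv M = mat 1 \<and> matrix_inv M ** M = mat 1"
    unfolding matrix_inv_def by (rule someI_ex)
  then show "M ** matrix_inv M = mat 1" "matrix_inv M ** M = mat 1" by auto
qed

lemma inner_mv: "(u::real^'m) \<bullet> ((M::real^'n^'m) *v v) = (transpose M *v u) \<bullet> v"
  by (simp add: dot_lmul_matrix)

lemma sym_inv:
  fixes M :: "real^'n^'n"
  assumes s: "transpose M = M" and i: "invertible M"
  shows "transpose (matrix_inv M) = matrix_inv M"
proof -
  define N where "N = matrix_inv M"
  have 1: "M ** N = mat 1" "N ** M = mat 1" unfolding N_def using invertible_matrix_inv[OF i] by auto
  have "transpose N ** M = mat 1"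
    using arg_cong[OF 1(1), of transpose] s by (simp add: matrix_transpose_mul)
  then have "transpose N = transpose N ** (M ** N)" using 1 by simp
  also have "\<dots> = (transpose N ** M) ** N" by (simp add: matrix_mul_assoc)
  also have "\<dots> = N" using \<open>transpose N ** M = mat 1\<close> by simp
  finally show ?thesis unfolding N_def .
qed

lemma inj_mv_zero:
  fixes M :: "real^'n^'m"
  assumes "\<And>x. M *v x = 0 \<Longrightarrow> x = 0"
  shows "inj ((*v) M)"
proof (rule injI)
  fix x y assume "M *v x = M *v y"
  then have "M *v (x - y) = 0" by (simp add: matrix_vector_mult_diff_distrib)
  then show "x = y" using assms[of "x - y"] by simp
qed

lemma pd_invertible:
  fixes M :: "real^'n^'n"
  assumes "\<And>x. x \<noteq> 0 \<Longrightarrow> 0 < x \<bullet> (M *v x)"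
  shows "invertible M"
proof -
  have "inj ((*v) M)"
  proof (rule inj_mv_zero)
    fix x assume "M *v x = 0"
    then show "x = 0" using assms[of x] by (cases "x = 0") auto
  qed
  then obtain B where "B ** M = mat 1" using matrix_left_invertible_injective by blast
  then show ?thesis using invertible_left_inverse by blast
qed

lemma gram_pd:
  fixes N :: "real^'n^'m"
  assumes "inj ((*v) N)" "x \<noteq> 0"
  shows "0 < x \<bullet> ((transpose N ** N) *v x)"
proof -
  have "N *v x \<noteq> 0"
    using assms injD[OF assms(1), of x 0] by auto
  moreover have "x \<bullet> ((transpose N ** N) *v x) = (N *v x) \<bullet> (N *v x)"
    by (simp only: matrix_vector_mul_assoc[symmetric] inner_mv transpose_transpose)
  ultimately show ?thesis by simp
qed

lemma sum_matrix_mv: "finite S \<Longrightarrow> (sum f S) *v (x::real^'n) = (\<Sum>t\<in>S. (f t :: real^'n^'m) *v x)"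
  by (induction S rule: finite_induct) (simp_all add: matrix_vector_mult_add_rdistrib)

lemma outer_mv: "outer_vec v *v y = (v \<bullet> y) *\<^sub>R v"
  by (simp add: outer_vec_def matrix_vector_mult_def inner_vec_def vec_eq_iff sum_distrib_left
      sum_distrib_right mult.commute mult.left_commute)

lemma sum_prod_univ: "(\<Sum>q\<in>(UNIV :: ('a::finite \<times> 'b::finite) set). F q) = (\<Sum>j\<in>UNIV. \<Sum>k\<in>UNIV. F (j, k))"
  by (simp add: sum.cartesian_product)

lemma bigX_apply: "(bigX Xd *v x) $ (i, t) = Xd i t \<bullet> (\<chi> k. x $ (i, k))"
proof -
  have "(bigX Xd *v x) $ (i, t) = (\<Sum>q\<in>UNIV. bigX Xd $ (i, t) $ q * x $ q)"
    by (simp add: matrix_vector_mult_def)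
  also have "\<dots> = (\<Sum>q\<in>UNIV. (if fst q = i then Xd i t $ snd q else 0) * x $ q)"
    by (rule sum.cong) (auto simp: bigX_def)
  also have "\<dots> = (\<Sum>j\<in>UNIV. \<Sum>k\<in>UNIV. (if j = i then Xd i t $ k else 0) * x $ (j, k))"
    by (subst sum_prod_univ) (simp cong: if_cong)
  also have "\<dots> = (\<Sum>j\<in>UNIV. \<Sum>k\<in>UNIV. if j = i then Xd i t $ k * x $ (i, k) else 0)"
    by (rule sum.cong[OF refl], rule sum.cong[OF refl]) auto
  also have "\<dots> = (\<Sum>k\<in>UNIV. Xd i t $ k * x $ (i, k))"
    by (subst sum.swap) (simp add: sum.delta)
  finally show ?thesis by (simp add: inner_vec_def)
qed

lemma bigX_inj:
  assumes S: "\<And>i. (\<Sum>t\<in>UNIV. outer_vec (Xd i t)) = Sig" and inv: "invertible Sig"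
  shows "inj ((*v) (bigX Xd))"
proof (rule inj_mv_zero)
  fix x assume x0: "bigX Xd *v x = 0"
  have "(\<chi> k. x $ (i, k)) = 0" for i
  proof -
    define xi where "xi = (\<chi> k. x $ (i, k))"
    have z: "Xd i t \<bullet> xi = 0" for t
      using arg_cong[OF x0, of "\<lambda>v. v $ (i, t)"] unfolding xi_def by (simp add: bigX_apply)
    have "Sig *v xi = (\<Sum>t\<in>UNIV. outer_vec (Xd i t) *v xi)"
      unfolding S[of i, symmetric] by (simp add: sum_matrix_mv)
    also have "\<dots> = 0" by (simp add: outer_mv z)
    finally have e: "Sig *v xi = Sig *v 0" by simp
    have "xi = 0" by (rule injD[OF inj_matrix_vector_mult[OF inv] e])
    then show ?thesis unfolding xi_def .
  qed
  then show "x = 0"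
    by (auto simp: vec_eq_iff)
qed

lemma DD_apply: "(dummyDD \<gamma> *v y) $ (i, k) = y $ (\<gamma> i, k)"
proof -
  have "(dummyDD \<gamma> *v y) $ (i, k) = (\<Sum>q\<in>UNIV. dummyDD \<gamma> $ (i, k) $ q * y $ q)"
    by (simp add: matrix_vector_mult_def)
  also have "\<dots> = (\<Sum>q\<in>UNIV. if q = (\<gamma> i, k) then y $ q else 0)"
    by (rule sum.cong) (auto simp: dummyDD_def dummyD_def prod_eq_iff)
  also have "\<dots> = y $ (\<gamma> i, k)"
    by (simp add: sum.delta)
  finally show ?thesis .
qed

lemma DD_inj:
  assumes "surj \<gamma>"
  shows "inj ((*v) (dummyDD \<gamma> :: real^('g::finite \<times> 'k::finite)^('n::finite \<times> 'k)))"
proof (rule inj_mv_zero)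
  fix y :: "real^('g \<times> 'k)" assume y0: "dummyDD \<gamma> *v y = (0 :: real^('n \<times> 'k))"
  show "y = 0"
  proof (subst vec_eq_iff, intro allI)
    fix q :: "'g \<times> 'k"
    obtain g k where q: "q = (g, k)" by (cases q)
    obtain i where "g = \<gamma> i" using assms by (metis surjD)
    then show "y $ q = 0 $ q"
      using arg_cong[OF y0, of "\<lambda>v. v $ (i, k)"] unfolding q by (simp add: DD_apply)
  qed
qed


theorem lemmaC1:
  fixes M :: "'a measure"
    and Xd :: "'n::finite \<Rightarrow> 't::finite \<Rightarrow> real^'k::finite"
    and Sig :: "real^'k^'k"
    and Y :: "'a \<Rightarrow> real^('n \<times> 't)"
    and B :: "real^('n \<times> 'k)"
    and \<sigma>2 :: real
    and \<gamma> :: "'n \<Rightarrow> 'g::finite"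
    and R :: "real^('g \<times> 'k)^'r::finite"
    and rv :: "real^'r"
  assumes "prob_space M"
    and "\<sigma>2 > 0"
    and "\<And>i. (\<Sum>t\<in>UNIV. outer_vec (Xd i t)) = Sig"
    and "invertible Sig"
    and "Y \<in> borel_measurable M"
    and "gaussian_vec M (\<lambda>\<omega>. transpose (bigX Xd) *v Y \<omega>)
           ((transpose (bigX Xd) ** bigX Xd) *v B) (\<sigma>2 *\<^sub>R (transpose (bigX Xd) ** bigX Xd))"
    and "surj \<gamma>"
    and "rank R = CARD('r)"
  shows "indep_rv M
           (\<lambda>\<omega>. R *v alpha_hat Xd \<gamma> (transpose (bigX Xd) *v Y \<omega>))
           (\<lambda>\<omega>. W_PCR Xd \<gamma> R rv (Y \<omega>))"
  proof -
  interpret prob_space M by (rule assms(1))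
  define X where "X = bigX Xd"
  define DD where "DD = (dummyDD \<gamma> :: real^('g \<times> 'k)^('n \<times> 'k))"
  define A where "A = transpose X ** X"
  define Xg where "Xg = Xgam Xd \<gamma>"
  have Xg: "Xg = X ** DD" unfolding Xg_def Xgam_def X_def DD_def ..
  define H where "H = transpose Xg ** Xg"
  define Qm where "Qm = matrix_inv H"
  define Gm where "Gm = R ** Qm ** transpose R"
  define Gi where "Gi = matrix_inv Gm"
  define K where "K = Qm ** transpose R ** Gi"
  define P where "P = R ** Qm ** transpose DD"
  define L where "L = A ** DD ** K"
  define Qw where "Qw = mat 1 - L ** P"
  define d where "d = L *v rv"
  define s where "s = (\<lambda>\<omega>. transpose X *v Y \<omega>)"
  define C where "C = \<sigma>2 *\<^sub>R A"
  define m where "m = A *v B"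
  note mv = matrix_vector_mul_assoc[symmetric]
  have injX: "inj ((*v) X)" unfolding X_def by (rule bigX_inj[OF assms(3) assms(4)])
  have injDD: "inj ((*v) DD)" unfolding DD_def by (rule DD_inj[OF assms(7)])
  have injXg: "inj ((*v) Xg)"
  proof -
    have "(*v) Xg = (*v) X \<circ> (*v) DD" unfolding Xg by (auto simp: mv)
    then show ?thesis using injX injDD by (simp add: inj_compose)
  qed
  have symA: "transpose A = A" unfolding A_def by (simp add: matrix_transpose_mul)
  have symH: "transpose H = H" unfolding H_def by (simp add: matrix_transpose_mul)
  have Hpd: "x \<noteq> 0 \<Longrightarrow> 0 < x \<bullet> (H *v x)" for x unfolding H_def by (rule gram_pd[OF injXg])
  have invH: "invertible H" by (rule pd_invertible[OF Hpd])
  have HQ: "H ** Qm = mat 1" "Qm ** H = mat 1" unfolding Qm_def using invertible_matrix_inv[OF invH] by auto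
  have symQ: "transpose Qm = Qm" unfolding Qm_def by (rule sym_inv[OF symH invH])
  have HQv: "H *v (Qm *v u) = u" for u using HQ(1) by (simp add: mv[of H Qm u, symmetric])
  have Qpd: "0 < y \<bullet> (Qm *v y)" if y: "y \<noteq> 0" for y
  proof -
    define u where "u = Qm *v y"
    have yu: "y = H *v u" unfolding u_def by (simp add: HQv)
    have "u \<noteq> 0" using y yu by auto
    then have "0 < u \<bullet> (H *v u)" by (rule Hpd)
    also have "u \<bullet> (H *v u) = y \<bullet> (Qm *v y)"
    proof -
      have "y \<bullet> (Qm *v y) = y \<bullet> u" unfolding u_def ..
      also have "\<dots> = (H *v u) \<bullet> u" using yu by simp
      also have "\<dots> = u \<bullet> (H *v u)" by (rule inner_commute)
      finally show ?thesis by simp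
    qed
    finally show ?thesis .
  qed
  have injRt: "inj ((*v) (transpose R))"
    using assms(8) rank_transpose[of R] full_rank_injective[of "transpose R"] by simp
  have Gpd: "0 < z \<bullet> (Gm *v z)" if z: "z \<noteq> 0" for z
  proof -
    have "transpose R *v z \<noteq> 0" using z injD[OF injRt, of z 0] by auto
    then have "0 < (transpose R *v z) \<bullet> (Qm *v (transpose R *v z))" by (rule Qpd)
    also have "\<dots> = z \<bullet> (Gm *v z)" unfolding Gm_def mv by (simp only: inner_mv)
    finally show ?thesis .
  qed
  have invG: "invertible Gm" by (rule pd_invertible[OF Gpd])
  have GiGv: "Gi *v (Gm *v a) = a" for a
    using invertible_matrix_inv(2)[OF invG] unfolding Gi_def by (simp add: mv[of "matrix_inv Gm" Gm a, symmetric])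
  have Pt: "transpose P = DD ** Qm ** transpose R"
    unfolding P_def by (simp add: matrix_transpose_mul symQ matrix_mul_assoc)
  have Hv: "H *v u = transpose DD *v (A *v (DD *v u))" for u
    unfolding H_def A_def Xg by (simp only: mv matrix_transpose_mul)
  have key: "Qw *v (A *v (transpose P *v a)) = 0" for a
  proof -
    define z where "z = A *v (DD *v (Qm *v (transpose R *v a)))"
    have z: "A *v (transpose P *v a) = z" unfolding z_def Pt by (simp only: mv)
    have Pz: "P *v z = Gm *v a"
      unfolding z_def P_def Gm_def mv Hv[symmetric] HQv ..
    have LPz: "L *v (P *v z) = z"
      unfolding Pz unfolding L_def K_def mv GiGv unfolding z_def ..
    show ?thesis unfolding z Qw_def by (simp add: matrix_vector_mult_diff_rdistrib LPz mv)
  qed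
  have g: "gaussian_vec M s m C"
    using assms(6) unfolding s_def m_def C_def A_def X_def .
  have sm: "s \<in> borel_measurable M" using g unfolding gaussian_vec_def by blast
  have Cv: "C *v v = \<sigma>2 *\<^sub>R (A *v v)" for v unfolding C_def by (rule scaleR_matrix_vector_assoc[symmetric])
  have gc: "(\<integral>\<omega>. cis (a \<bullet> s \<omega>) \<partial>M) = cis (a \<bullet> m) * complex_of_real (exp (- (a \<bullet> (C *v a)) / 2))" for a
    by (rule gauss_char[OF assms(1) g])
  have Ueq: "(\<lambda>\<omega>. R *v alpha_hat Xd \<gamma> (transpose (bigX Xd) *v Y \<omega>)) = (\<lambda>\<omega>. P *v s \<omega>)"
  proof
    fix \<omega>
    show "R *v alpha_hat Xd \<gamma> (transpose (bigX Xd) *v Y \<omega>) = P *v s \<omega>"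
      unfolding alpha_hat_def s_def P_def Qm_def H_def Xg_def X_def DD_def mv ..
  qed
  have Veq: "(\<lambda>\<omega>. W_PCR Xd \<gamma> R rv (Y \<omega>)) = (\<lambda>\<omega>. Qw *v s \<omega> + d)"
  proof
    fix \<omega>
    define ah where "ah = Qm *v (transpose DD *v s \<omega>)"
    have ah: "alpha_hat Xd \<gamma> (transpose (bigX Xd) *v Y \<omega>) = ah"
      unfolding ah_def alpha_hat_def s_def Qm_def H_def Xg_def X_def DD_def ..
    have Rah: "R *v ah = P *v s \<omega>" unfolding ah_def P_def mv ..
    have XXg: "(transpose X ** Xg) *v v = A *v (DD *v v)" for v
      unfolding Xg A_def mv ..
    have XXgv: "transpose X *v (Xg *v v) = A *v (DD *v v)" for v
      unfolding Xg A_def mv ..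
    have Lv: "L *v v = A *v (DD *v (K *v v))" for v unfolding L_def mv ..
    have "W_PCR Xd \<gamma> R rv (Y \<omega>) = (transpose X ** Xg) *v (ah - K *v (R *v ah - rv)) + transpose X *v (Y \<omega> - Xg *v ah)"
      unfolding W_PCR_def alpha_hat_R_def U_hat_def Let_def ah
      unfolding K_def Gi_def Gm_def Qm_def H_def Xg_def X_def DD_def ..
    also have "\<dots> = s \<omega> - L *v (P *v s \<omega>) + L *v rv"
      unfolding Rah s_def
      by (simp only: matrix_vector_right_distrib matrix_vector_mult_diff_distrib XXg XXgv Lv) (simp add: algebra_simps)
    also have "\<dots> = Qw *v s \<omega> + d"
      unfolding Qw_def d_def by (simp add: matrix_vector_mult_diff_rdistrib mv)
    finally show "W_PCR Xd \<gamma> R rv (Y \<omega>) = Qw *v s \<omega> + d" .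
  qed
  show ?thesis
    unfolding Ueq Veq
  proof (rule indep_from_char[OF assms(1)])
    show "(\<lambda>\<omega>. P *v s \<omega>) \<in> borel_measurable M"
      by (rule measurable_compose[OF sm borel_measurable_continuous_onI]) (intro continuous_intros)
    show "(\<lambda>\<omega>. Qw *v s \<omega> + d) \<in> borel_measurable M"
      by (rule measurable_compose[OF sm borel_measurable_continuous_onI]) (intro continuous_intros)
    fix a b
    define x where "x = transpose P *v a"
    define y where "y = transpose Qw *v b"
    have e1: "a \<bullet> (P *v s \<omega>) = x \<bullet> s \<omega>" for \<omega> unfolding x_def by (rule inner_mv)
    have e2: "b \<bullet> (Qw *v s \<omega> + d) = y \<bullet> s \<omega> + b \<bullet> d" for \<omega> unfolding y_def by (simp add: inner_add_right inner_mv)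
    have cs: "(\<integral>\<omega>. cis (v \<bullet> s \<omega> + c) \<partial>M) = cis c * (cis (v \<bullet> m) * complex_of_real (exp (- (v \<bullet> (C *v v)) / 2)))" for v c
    proof -
      have "(\<integral>\<omega>. cis (v \<bullet> s \<omega> + c) \<partial>M) = (\<integral>\<omega>. cis c * cis (v \<bullet> s \<omega>) \<partial>M)"
        by (simp add: cis_mult[symmetric] add.commute)
      also have "\<dots> = cis c * (\<integral>\<omega>. cis (v \<bullet> s \<omega>) \<partial>M)" by simp
      finally show ?thesis by (simp add: gc)
    qed
    have c0: "cis (v \<bullet> s \<omega>) = cis (v \<bullet> s \<omega> + 0)" for v \<omega> by simp
    have yCx: "y \<bullet> (C *v x) = 0"
    proof -
      have "y \<bullet> (C *v x) = \<sigma>2 * (b \<bullet> (Qw *v (A *v (transpose P *v a))))"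
        unfolding Cv y_def x_def by (simp add: inner_mv)
      then show ?thesis by (simp only: key inner_zero_right mult_zero_right)
    qed
    have xCy: "x \<bullet> (C *v y) = 0"
    proof -
      have "x \<bullet> (C *v y) = (transpose C *v x) \<bullet> y" by (rule inner_mv)
      also have "transpose C = C" unfolding C_def using symA by (simp add: transpose_scalar)
      finally show ?thesis using yCx by (simp add: inner_commute)
    qed
    have quad: "(x + y) \<bullet> (C *v (x + y)) = x \<bullet> (C *v x) + y \<bullet> (C *v y)"
      using xCy yCx by (simp add: matrix_vector_right_distrib inner_add_left inner_add_right)
    have ex: "exp (- (p + q) / 2) = exp (- p / 2) * exp (- q / 2)" for p q :: real
      by (simp add: exp_add[symmetric] field_simps)
    have "(\<integral>\<omega>. cis (a \<bullet> (P *v s \<omega>) + b \<bullet> (Qw *v s \<omega> + d)) \<partial>M) = (\<integral>\<omega>. cis ((x + y) \<bullet> s \<omega> + b \<bullet> d) \<partial>M)"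
      unfolding e1 e2 by (simp add: inner_add_left add.assoc)
    also have "\<dots> = cis (b \<bullet> d) * (cis ((x + y) \<bullet> m) * complex_of_real (exp (- ((x + y) \<bullet> (C *v (x + y))) / 2)))"
      by (rule cs)
    also have "\<dots> = (cis (x \<bullet> m) * complex_of_real (exp (- (x \<bullet> (C *v x)) / 2))) *
        (cis (b \<bullet> d) * (cis (y \<bullet> m) * complex_of_real (exp (- (y \<bullet> (C *v y)) / 2))))"
      unfolding quad ex by (simp add: inner_add_left cis_mult[symmetric] mult_ac)
    also have "\<dots> = (\<integral>\<omega>. cis (a \<bullet> (P *v s \<omega>)) \<partial>M) * (\<integral>\<omega>. cis (b \<bullet> (Qw *v s \<omega> + d)) \<partial>M)"
      unfolding e1 e2 by (simp add: gc cs)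
    finally show "(\<integral>\<omega>. cis (a \<bullet> (P *v s \<omega>) + b \<bullet> (Qw *v s \<omega> + d)) \<partial>M) =
        (\<integral>\<omega>. cis (a \<bullet> (P *v s \<omega>)) \<partial>M) * (\<integral>\<omega>. cis (b \<bullet> (Qw *v s \<omega> + d)) \<partial>M)" .
  qed
qed


end
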